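(* Let $\mathcal{H}$ be a real Hilbert space and let $f,g\in \Gamma_0(\mathcal{H})$. Suppose that for some $x_0\in \operatorname{dom} f\cap \operatorname{dom} g$, $$\Vert \operatorname{prox}_f(x)-x_0\Vert\leq \Vert \operatorname{prox}_g(x)-x_0\Vert \quad \text{for all } x\in \mathcal{H}.$$ Then $g-g(x_0)\leq f-f(x_0)$ on $\mathcal{H}$.
   Context: $\Gamma_0(\mathcal{H})$ denotes the set of proper, convex, lower semicontinuous functions $\mathcal{H}\to\mathbb{R}\cup\{+\infty\}$. For $f\in\Gamma_0(\mathcal{H})$, $\operatorname{prox}_f(x)=\operatorname{argmin}_{y\in\mathcal{H}}\{f(y)+\tfrac12\Vert x-y\Vert^2\}$ (the minimizer exists and is unique). $\operatorname{dom} f=\{x: f(x)<+\infty\}$. *)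

theory Defs
  imports "HOL-Analysis.Analysis" "HOL-Library.Extended_Real"
begin

text \<open>Functions H -> R \<union> {+\<infinity>} are modelled as maps into ereal that never take the value -\<infinity>.\<close>

definition proper_fun :: "('a \<Rightarrow> ereal) \<Rightarrow> bool" where
  "proper_fun f \<longleftrightarrow> (\<forall>x. f x \<noteq> -\<infinity>) \<and> (\<exists>x. f x < \<infinity>)"

definition convex_fun :: "('a::real_vector \<Rightarrow> ereal) \<Rightarrow> bool" where
  "convex_fun f \<longleftrightarrow> (\<forall>x y. \<forall>t::real. 0 < t \<and> t < 1 \<longrightarrow>
      f ((1 - t) *\<^sub>R x + t *\<^sub>R y) \<le> ereal (1 - t) * f x + ereal t * f y)"

definition lsc_fun :: "('a::topological_space \<Rightarrow> ereal) \<Rightarrow> bool" where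
  "lsc_fun f \<longleftrightarrow> (\<forall>x. f x \<le> Liminf (at x) f)"

definition Gamma0 :: "('a::real_normed_vector \<Rightarrow> ereal) set" where
  "Gamma0 = {f. proper_fun f \<and> convex_fun f \<and> lsc_fun f}"

definition edom :: "('a \<Rightarrow> ereal) \<Rightarrow> 'a set" where
  "edom f = {x. f x < \<infinity>}"

definition prox :: "('a::real_normed_vector \<Rightarrow> ereal) \<Rightarrow> 'a \<Rightarrow> 'a" where
  "prox f x = (THE y. \<forall>z. f y + ereal ((norm (x - y))\<^sup>2 / 2) \<le> f z + ereal ((norm (x - z))\<^sup>2 / 2))"

end

theory Submission
  imports Defs
begin

lemma conv_real:
  assumes "convex_fun h" "h x = ereal a" "h y = ereal b" "0 < t" "t < 1"
  shows "h ((1 - t) *\<^sub>R x + t *\<^sub>R y) \<le> ereal ((1 - t) * a + t * b)"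
  using assms unfolding convex_fun_def by (metis plus_ereal.simps(1) times_ereal.simps(1))

lemma lsc_nbhd:
  fixes h :: "'a::metric_space \<Rightarrow> ereal"
  assumes "lsc_fun h" "ereal c < h x"
  shows "\<exists>\<rho>>0. \<forall>u. dist u x < \<rho> \<longrightarrow> ereal c < h u"
proof -
  have "ereal c < Liminf (at x) h" using assms unfolding lsc_fun_def by (meson less_le_trans)
  then have "ereal c < (SUP e\<in>{0<..}. INF y\<in>(ball x e - {x}). h y)" by (simp add: Liminf_at)
  then obtain e where e: "e > 0" "ereal c < (INF y\<in>(ball x e - {x}). h y)"
    by (auto simp: less_SUP_iff)
  show ?thesis
  proof (intro exI[of _ e] conjI allI impI)
    fix u assume "dist u x < e"
    show "ereal c < h u"
    proof (cases "u = x")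
      case True then show ?thesis using assms by simp
    next
      case False
      then have "u \<in> ball x e - {x}" using \<open>dist u x < e\<close> by (simp add: dist_commute)
      then show ?thesis using e(2) by (meson INF_lower less_le_trans)
    qed
  qed (use e in auto)
qed


lemma lin_lb:
  fixes h :: "'a::real_normed_vector \<Rightarrow> ereal"
  assumes conv: "convex_fun h" and lsc: "lsc_fun h" and nm: "\<And>x. h x \<noteq> -\<infinity>"
    and fin: "h x0 = ereal a"
  shows "\<exists>A B. B \<ge> 0 \<and> (\<forall>u. ereal (A - B * norm (u - x0)) \<le> h u)"
proof -
  obtain \<rho> where \<rho>: "\<rho> > 0" "\<And>u. dist u x0 < \<rho> \<Longrightarrow> ereal (a - 1) < h u"
    using lsc_nbhd[OF lsc, of "a - 1" x0] fin by auto
  have "ereal (a - 1 - (2/\<rho>) * norm (u - x0)) \<le> h u" for u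
  proof (cases "norm (u - x0) < \<rho>")
    case True
    then have "ereal (a - 1) < h u" using \<rho>(2) by (simp add: dist_norm)
    moreover have "a - 1 - (2/\<rho>) * norm (u - x0) \<le> a - 1" using \<rho>(1) by simp
    ultimately show ?thesis by (meson ereal_less_eq(3) less_imp_le order_trans)
  next
    case False
    define d where "d = norm (u - x0)"
    have d: "d \<ge> \<rho>" using False d_def by simp
    define t where "t = \<rho> / (2 * d)"
    have t0: "0 < t" using d \<rho> by (simp add: t_def)
    have t1: "t < 1" using d \<rho> by (simp add: t_def field_simps)
    have td: "t * d = \<rho> / 2" using d \<rho> by (simp add: t_def)
    define z where "z = (1 - t) *\<^sub>R x0 + t *\<^sub>R u"
    have "z - x0 = t *\<^sub>R (u - x0)" by (simp add: z_def algebra_simps)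
    then have "dist z x0 = t * d" using t0 by (simp add: dist_norm d_def)
    then have hz: "ereal (a - 1) < h z" using \<rho> td by simp
    show ?thesis
    proof (cases "h u")
      case (real b)
      have "h z \<le> ereal ((1 - t) * a + t * b)" using conv_real[OF conv fin real t0 t1] z_def by simp
      with hz have "ereal (a - 1) < ereal ((1 - t) * a + t * b)" by (rule less_le_trans)
      then have "a - 1 < (1 - t) * a + t * b" by simp
      then have "t * (a - b) < 1" by (simp add: algebra_simps)
      then have "a - b < 1 / t" using t0 by (simp add: field_simps)
      moreover have "1 / t = (2 / \<rho>) * d" using t0 \<rho> d by (simp add: t_def field_simps)
      ultimately show ?thesis using real d_def by simp
    next
      case PInf then show ?thesis by simp
    next
      case MInf then show ?thesis using nm by simp
    qed
  qed
  then show ?thesis using \<rho>(1) by (intro exI[of _ "a - 1"] exI[of _ "2/\<rho>"]) auto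
qed

lemma par_id0:
  fixes p q :: "'a::real_inner"
  shows "(norm (p + q))\<^sup>2 + (norm (q - p))\<^sup>2 = 2 * (norm p)\<^sup>2 + 2 * (norm q)\<^sup>2"
  unfolding power2_norm_eq_inner
  by (simp add: inner_add_left inner_add_right inner_diff_left inner_diff_right inner_commute[of q p])

lemma lin_aux: "(X::real) = Y/4 \<Longrightarrow> Y + Z = 2*P + 2*Q \<Longrightarrow> X = (P+Q)/2 - Z/4"
  by argo

lemma par_id1:
  fixes p q :: "'a::real_inner"
  shows "(norm ((1/2) *\<^sub>R (p + q)))\<^sup>2 = ((norm p)\<^sup>2 + (norm q)\<^sup>2) / 2 - (norm (q - p))\<^sup>2 / 4"
proof -
  have "(norm ((1/2) *\<^sub>R (p + q)))\<^sup>2 = (norm (p + q))\<^sup>2 / 4"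
    by (simp add: power2_eq_square)
  then show ?thesis using par_id0[of p q] by (rule lin_aux)
qed

lemma par_id:
  fixes a b y :: "'a::real_inner"
  shows "(norm (y - ((1/2) *\<^sub>R a + (1/2) *\<^sub>R b)))\<^sup>2 = ((norm (y - a))\<^sup>2 + (norm (y - b))\<^sup>2) / 2 - (norm (a - b))\<^sup>2 / 4"
proof -
  have y2: "y = (1/2) *\<^sub>R y + (1/2) *\<^sub>R y"
    by (metis scaleR_add_left field_sum_of_halves scaleR_one)
  have e: "y - ((1/2) *\<^sub>R a + (1/2) *\<^sub>R b) = (1/2) *\<^sub>R ((y - a) + (y - b))"
    by (subst y2, simp add: algebra_simps)
  have e2: "(y - b) - (y - a) = a - b" by simp
  show ?thesis unfolding e using par_id1[of "y - a" "y - b"] unfolding e2 .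
qed

lemma mid_alg: "(l::real) > 0 \<Longrightarrow> (\<alpha> + \<beta>)/2 + ((A + B) / 2 - C / 4) / (2*l) = (\<alpha> + A / (2*l) + \<beta> + B / (2*l)) / 2 - C / (8*l)"
  by (simp add: field_simps)

lemma mid_ineq:
  fixes h :: "'a::real_inner \<Rightarrow> ereal"
  assumes conv: "convex_fun h" and ha: "h a = ereal \<alpha>" and hb: "h b = ereal \<beta>" and lpos: "l > 0"
    and le: "ereal mr \<le> h ((1/2) *\<^sub>R a + (1/2) *\<^sub>R b) + ereal ((norm (y - ((1/2) *\<^sub>R a + (1/2) *\<^sub>R b)))\<^sup>2 / (2*l))"
  shows "mr \<le> (\<alpha> + (norm (y - a))\<^sup>2 / (2*l) + \<beta> + (norm (y - b))\<^sup>2 / (2*l)) / 2 - (norm (a - b))\<^sup>2 / (8*l)"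
proof -
  have "h ((1 - 1/2) *\<^sub>R a + (1/2) *\<^sub>R b) \<le> ereal ((1 - 1/2) * \<alpha> + (1/2) * \<beta>)"
    by (rule conv_real[OF conv ha hb]) auto
  then have hm: "h ((1/2) *\<^sub>R a + (1/2) *\<^sub>R b) \<le> ereal ((\<alpha> + \<beta>)/2)" by (simp add: add_divide_distrib)
  have "ereal mr \<le> ereal ((\<alpha> + \<beta>)/2 + (norm (y - ((1/2) *\<^sub>R a + (1/2) *\<^sub>R b)))\<^sup>2 / (2*l))"
  proof -
    have "h ((1/2) *\<^sub>R a + (1/2) *\<^sub>R b) + ereal ((norm (y - ((1/2) *\<^sub>R a + (1/2) *\<^sub>R b)))\<^sup>2 / (2*l)) \<le> ereal ((\<alpha> + \<beta>)/2) + ereal ((norm (y - ((1/2) *\<^sub>R a + (1/2) *\<^sub>R b)))\<^sup>2 / (2*l))"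
      using hm by (rule add_right_mono)
    from order_trans[OF le this] show ?thesis by simp
  qed
  then have "mr \<le> (\<alpha> + \<beta>)/2 + (((norm (y - a))\<^sup>2 + (norm (y - b))\<^sup>2) / 2 - (norm (a - b))\<^sup>2 / 4) / (2*l)"
    by (simp add: par_id)
  also have "\<dots> = (\<alpha> + (norm (y - a))\<^sup>2 / (2*l) + \<beta> + (norm (y - b))\<^sup>2 / (2*l)) / 2 - (norm (a - b))\<^sup>2 / (8*l)"
    using lpos by (rule mid_alg)
  finally show ?thesis .
qed

lemma quad_lb: "(l::real) > 0 \<Longrightarrow> - B * s + s\<^sup>2 / (2*l) \<ge> - B\<^sup>2 * l / 2"
proof -
  assume l: "l > 0"
  have "s\<^sup>2 / (2*l) - B * s + B\<^sup>2 * l / 2 = (s - B*l)\<^sup>2 / (2*l)"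
    using l by (simp add: field_simps power2_eq_square)
  also have "\<dots> \<ge> 0" using l by simp
  finally show ?thesis by simp
qed

lemma div_aux: "(X::real) / (8*l) \<le> Y / 2 \<Longrightarrow> l > 0 \<Longrightarrow> X \<le> 4 * l * Y"
  by (simp add: field_simps)

lemma minimizer_ex:
  fixes h :: "'a::{real_inner,complete_space} \<Rightarrow> ereal"
  assumes conv: "convex_fun h" and lsc: "lsc_fun h" and nm: "\<And>x. h x \<noteq> -\<infinity>"
    and fin: "h x0 = ereal a" and lpos: "l > 0"
  shows "\<exists>v. h v < \<infinity> \<and> (\<forall>z. h v + ereal ((norm (y - v))\<^sup>2 / (2*l)) \<le> h z + ereal ((norm (y - z))\<^sup>2 / (2*l)))"
proof -
  define q where "q u = (norm (y - u))\<^sup>2 / (2*l)" for u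
  define k where "k u = h u + ereal (q u)" for u
  obtain A B where AB: "B \<ge> 0" "\<And>u. ereal (A - B * norm (u - x0)) \<le> h u"
    using lin_lb[OF conv lsc nm fin] by auto
  define L where "L = A - B * norm (y - x0) - B\<^sup>2 * l / 2"
  have kL: "ereal L \<le> k u" for u
  proof -
    have "norm (u - x0) \<le> norm (u - y) + norm (y - x0)" by (metis dist_norm dist_triangle)
    then have "B * norm (u - x0) \<le> B * norm (u - y) + B * norm (y - x0)"
      using AB(1) by (metis distrib_left mult_left_mono)
    then have "A - B * norm (y - x0) - B * norm (y - u) \<le> A - B * norm (u - x0)"
      by (simp add: norm_minus_commute)
    then have "ereal (A - B * norm (y - x0) - B * norm (y - u)) \<le> h u"
      using AB(2)[of u] by (meson ereal_less_eq(3) order_trans)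
    then have "ereal (A - B * norm (y - x0) - B * norm (y - u)) + ereal (q u) \<le> k u"
      unfolding k_def by (rule add_right_mono)
    moreover have "L \<le> A - B * norm (y - x0) - B * norm (y - u) + q u"
      using quad_lb[OF lpos, of B "norm (y - u)"] unfolding L_def q_def by simp
    ultimately show ?thesis by (metis ereal_less_eq(3) order_trans plus_ereal.simps(1))
  qed
  define m where "m = (INF u. k u)"
  have mL: "ereal L \<le> m" unfolding m_def by (rule INF_greatest) (rule kL)
  have mU: "m \<le> ereal (a + q x0)" unfolding m_def
    using INF_lower[OF UNIV_I, of k x0] by (simp add: k_def fin)
  obtain mr where mr: "m = ereal mr" using mL mU by (cases m) auto
  have "\<exists>u. k u < ereal (mr + 1 / Suc n)" for n
  proof -
    have "m < ereal (mr + 1 / Suc n)" using mr by simp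
    then show ?thesis unfolding m_def by (simp add: INF_less_iff)
  qed
  then obtain u where u: "\<And>n. k (u n) < ereal (mr + 1 / Suc n)" by metis
  have ufin: "\<exists>r. h (u n) = ereal r" for n
  proof (cases "h (u n)")
    case PInf then show ?thesis using u[of n] by (simp add: k_def)
  next
    case MInf then show ?thesis using nm by simp
  qed simp
  have mk: "ereal mr \<le> k w" for w
    using INF_lower[OF UNIV_I, of k w] mr m_def by simp
  have bound: "(norm (u n - u j))\<^sup>2 \<le> 4 * l * (1 / Suc n + 1 / Suc j)" for n j
  proof -
    obtain \<alpha> where \<alpha>: "h (u n) = ereal \<alpha>" using ufin by blast
    obtain \<beta> where \<beta>: "h (u j) = ereal \<beta>" using ufin by blast
    have "mr \<le> (\<alpha> + (norm (y - u n))\<^sup>2 / (2*l) + \<beta> + (norm (y - u j))\<^sup>2 / (2*l)) / 2 - (norm (u n - u j))\<^sup>2 / (8*l)"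
      by (rule mid_ineq[OF conv \<alpha> \<beta> lpos]) (use mk in \<open>simp add: k_def q_def\<close>)
    moreover have "\<alpha> + (norm (y - u n))\<^sup>2 / (2*l) < mr + 1 / Suc n"
      using u[of n] by (simp add: k_def q_def \<alpha>)
    moreover have "\<beta> + (norm (y - u j))\<^sup>2 / (2*l) < mr + 1 / Suc j"
      using u[of j] by (simp add: k_def q_def \<beta>)
    ultimately have "(norm (u n - u j))\<^sup>2 / (8*l) \<le> (1 / Suc n + 1 / Suc j) / 2"
      by argo
    then show ?thesis using lpos by (rule div_aux)
  qed
  have "Cauchy u"
  proof (rule CauchyI)
    fix e :: real assume e: "e > 0"
    obtain N :: nat where N: "8 * l / e\<^sup>2 < N" using reals_Archimedean2 by blast
    have Npos: "N > 0" using N lpos e by (metis divide_pos_pos gr0I less_le_trans of_nat_0 order_less_irrefl zero_less_mult_iff zero_less_numeral zero_less_power less_imp_le)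
    show "\<exists>M. \<forall>m\<ge>M. \<forall>n\<ge>M. norm (u m - u n) < e"
    proof (intro exI allI impI)
      fix n j assume nj: "N \<le> n" "N \<le> j"
      have "1 / real (Suc n) \<le> 1 / N" using nj Npos by (simp add: frac_le)
      moreover have "1 / real (Suc j) \<le> 1 / N" using nj Npos by (simp add: frac_le)
      ultimately have "1 / real (Suc n) + 1 / real (Suc j) \<le> 2 * (1 / N)" by argo
      then have "4 * l * (1 / real (Suc n) + 1 / real (Suc j)) \<le> 4 * l * (2 * (1 / N))"
        using lpos by (intro mult_left_mono) auto
      then have "(norm (u n - u j))\<^sup>2 \<le> 4 * l * (2 * (1 / N))"
        using bound[of n j] by (rule order_trans[rotated])
      also have "\<dots> < e\<^sup>2" using N Npos e lpos by (simp add: field_simps)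
      finally show "norm (u n - u j) < e" using e by (simp add: power_less_imp_less_base)
    qed
  qed
  then obtain v where v: "u \<longlonglongrightarrow> v" using Cauchy_convergent_iff convergent_def by blast
  have kv: "k v \<le> m"
  proof (rule ccontr)
    assume "\<not> k v \<le> m"
    then have "ereal mr < h v + ereal (q v)" using mr k_def by simp
    then have "ereal (mr - q v) < h v" by (cases "h v") auto
    then obtain c where c: "ereal (mr - q v) < ereal c" "ereal c < h v" using ereal_dense2 by blast
    define \<eta> where "\<eta> = (c - (mr - q v)) / 2"
    have \<eta>: "\<eta> > 0" using c(1) by (simp add: \<eta>_def)
    obtain \<rho> where \<rho>: "\<rho> > 0" "\<And>w. dist w v < \<rho> \<Longrightarrow> ereal c < h w"
      using lsc_nbhd[OF lsc c(2)] by auto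
    have qc: "(\<lambda>n. q (u n)) \<longlonglongrightarrow> q v" unfolding q_def using lpos by (intro tendsto_intros v) auto
    obtain N1 where N1: "\<And>n. n \<ge> N1 \<Longrightarrow> dist (u n) v < \<rho>" using metric_LIMSEQ_D[OF v \<rho>(1)] by blast
    obtain N2 where N2: "\<And>n. n \<ge> N2 \<Longrightarrow> dist (q (u n)) (q v) < \<eta>" using metric_LIMSEQ_D[OF qc \<eta>] by blast
    obtain N3 :: nat where N3: "1 / \<eta> < N3" using reals_Archimedean2 by blast
    define n where "n = max (max N1 N2) N3"
    obtain r where r: "h (u n) = ereal r" using ufin by blast
    have "ereal c < h (u n)" using \<rho>(2)[OF N1[of n]] n_def by simp
    then have "ereal c < ereal r" using r by simp
    then have rc: "c < r" by simp
    have "\<bar>q (u n) - q v\<bar> < \<eta>" using N2[of n] n_def by (simp add: dist_real_def)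
    then have qn: "q v - \<eta> < q (u n)" by argo
    have "r + q (u n) < mr + 1 / Suc n" using u[of n] r by (simp add: k_def)
    moreover have "1 / real (Suc n) < \<eta>"
    proof -
      have "1 / \<eta> < Suc n" using N3 n_def by simp
      then show ?thesis using \<eta> by (simp add: field_simps)
    qed
    ultimately show False using rc qn \<eta>_def by argo
  qed
  show ?thesis
  proof (intro exI conjI allI)
    show "h v < \<infinity>" using kv mr k_def by (cases "h v") auto
    fix z show "h v + ereal ((norm (y - v))\<^sup>2 / (2*l)) \<le> h z + ereal ((norm (y - z))\<^sup>2 / (2*l))"
      using kv mk[of z] mr by (simp add: k_def q_def)
  qed
qed

lemma minimizer_uniq:
  fixes h :: "'a::real_inner \<Rightarrow> ereal"
  assumes conv: "convex_fun h" and nm: "\<And>x. h x \<noteq> -\<infinity>"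
    and fin: "h x0 = ereal a" and lpos: "l > 0"
    and v1: "\<forall>z. h v1 + ereal ((norm (y - v1))\<^sup>2 / (2*l)) \<le> h z + ereal ((norm (y - z))\<^sup>2 / (2*l))"
    and v2: "\<forall>z. h v2 + ereal ((norm (y - v2))\<^sup>2 / (2*l)) \<le> h z + ereal ((norm (y - z))\<^sup>2 / (2*l))"
  shows "v1 = v2"
proof -
  have fin1: "h v1 \<noteq> \<infinity>" using v1[rule_format, of x0] fin by auto
  have fin2: "h v2 \<noteq> \<infinity>" using v2[rule_format, of x0] fin by auto
  obtain \<alpha>1 where a1: "h v1 = ereal \<alpha>1" using fin1 nm by (cases "h v1") auto
  obtain \<alpha>2 where a2: "h v2 = ereal \<alpha>2" using fin2 nm by (cases "h v2") auto
  define mid where "mid = (1/2) *\<^sub>R v1 + (1/2) *\<^sub>R v2"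
  have M: "mr \<le> (\<alpha>1 + (norm (y - v1))\<^sup>2 / (2*l) + \<alpha>2 + (norm (y - v2))\<^sup>2 / (2*l)) / 2 - (norm (v1 - v2))\<^sup>2 / (8*l)"
    if "ereal mr \<le> h mid + ereal ((norm (y - mid))\<^sup>2 / (2*l))" for mr
    by (rule mid_ineq[OF conv a1 a2 lpos]) (use that in \<open>simp add: mid_def\<close>)
  have i1: "ereal (\<alpha>1 + (norm (y - v1))\<^sup>2 / (2*l)) \<le> h mid + ereal ((norm (y - mid))\<^sup>2 / (2*l))"
    using v1[rule_format, of mid] a1 by simp
  have i2: "ereal (\<alpha>2 + (norm (y - v2))\<^sup>2 / (2*l)) \<le> h mid + ereal ((norm (y - mid))\<^sup>2 / (2*l))"
    using v2[rule_format, of mid] a2 by simp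
  have "(norm (v1 - v2))\<^sup>2 / (8*l) \<le> 0"
    using M[OF i1] M[OF i2] by argo
  then have "(norm (v1 - v2))\<^sup>2 \<le> 0" using lpos by (simp add: divide_le_0_iff)
  then show ?thesis by simp
qed

lemma norm_expand:
  fixes p w :: "'a::real_inner"
  shows "(norm (p - t *\<^sub>R w))\<^sup>2 = (norm p)\<^sup>2 - 2 * t * inner p w + t\<^sup>2 * (norm w)\<^sup>2"
  unfolding power2_norm_eq_inner
  by (simp add: inner_diff_left inner_diff_right inner_commute[of w p] power2_eq_square algebra_simps)

lemma subgrad:
  fixes h :: "'a::real_inner \<Rightarrow> ereal"
  assumes conv: "convex_fun h" and nm: "\<And>x. h x \<noteq> -\<infinity>" and lpos: "l > 0"
    and vmin: "\<forall>z. h v + ereal ((norm (y - v))\<^sup>2 / (2*l)) \<le> h z + ereal ((norm (y - z))\<^sup>2 / (2*l))"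
    and hv: "h v = ereal a"
  shows "h v + ereal (inner (y - v) (u - v) / l) \<le> h u"
proof (cases "h u")
  case PInf then show ?thesis by simp
next
  case MInf then show ?thesis using nm by simp
next
  case (real b)
  define D where "D = (norm (u - v))\<^sup>2"
  have D0: "D \<ge> 0" by (simp add: D_def)
  have key: "a + inner (y - v) (u - v) / l \<le> b + t * D / (2*l)" if t: "0 < t" "t < 1" for t
  proof -
    define ut where "ut = (1 - t) *\<^sub>R v + t *\<^sub>R u"
    have hut: "h ut \<le> ereal ((1 - t) * a + t * b)" unfolding ut_def by (rule conv_real[OF conv hv real t])
    have e: "y - ut = (y - v) - t *\<^sub>R (u - v)" by (simp add: ut_def algebra_simps)
    have nut: "(norm (y - ut))\<^sup>2 = (norm (y - v))\<^sup>2 - 2 * t * inner (y - v) (u - v) + t\<^sup>2 * D"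
      unfolding e D_def by (rule norm_expand)
    have "ereal (a + (norm (y - v))\<^sup>2 / (2*l)) \<le> h ut + ereal ((norm (y - ut))\<^sup>2 / (2*l))"
      using vmin[rule_format, of ut] hv by simp
    also have "\<dots> \<le> ereal ((1 - t) * a + t * b) + ereal ((norm (y - ut))\<^sup>2 / (2*l))"
      using hut by (rule add_right_mono)
    finally have "a + (norm (y - v))\<^sup>2 / (2*l) \<le> (1 - t) * a + t * b + (norm (y - ut))\<^sup>2 / (2*l)" by simp
    moreover have "(norm (y - ut))\<^sup>2 / (2*l) = (norm (y - v))\<^sup>2 / (2*l) - t * (inner (y - v) (u - v) / l) + t * (t * D / (2*l))"
      unfolding nut using lpos by (simp add: field_simps power2_eq_square)
    ultimately have "t * (a + inner (y - v) (u - v) / l) \<le> t * (b + t * D / (2*l))"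
      by (simp add: algebra_simps)
    then show ?thesis using t by simp
  qed
  have "a + inner (y - v) (u - v) / l \<le> b"
  proof (rule field_le_epsilon)
    fix e :: real assume e: "e > 0"
    define t where "t = min (1/2) (2 * l * e / (D + 1))"
    have t0: "0 < t" using e lpos D0 by (simp add: t_def)
    have t1: "t < 1" by (simp add: t_def)
    have "t * D / (2*l) \<le> (2 * l * e / (D + 1)) * D / (2*l)"
      using lpos D0 by (intro divide_right_mono mult_right_mono) (auto simp: t_def)
    also have "\<dots> = e * (D / (D + 1))"
      using lpos D0 by simp
    also have "\<dots> \<le> e"
    proof -
      have "D / (D + 1) \<le> 1" using D0 by simp
      then show ?thesis using e by (metis mult_left_mono mult.right_neutral less_imp_le)
    qed
    finally show "a + inner (y - v) (u - v) / l \<le> b + e" using key[OF t0 t1] by argo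
  qed
  then show ?thesis using hv real by simp
qed

lemma gamma_props:
  assumes "f \<in> Gamma0"
  shows "convex_fun f" "lsc_fun f" "\<And>x. f x \<noteq> -\<infinity>" "\<exists>x0 a. f x0 = ereal a"
proof -
  show "convex_fun f" "lsc_fun f" "\<And>x. f x \<noteq> -\<infinity>" using assms by (auto simp: Gamma0_def proper_fun_def)
  obtain x0 where "f x0 < \<infinity>" using assms by (auto simp: Gamma0_def proper_fun_def)
  moreover have "f x0 \<noteq> -\<infinity>" using assms by (auto simp: Gamma0_def proper_fun_def)
  ultimately show "\<exists>x0 a. f x0 = ereal a" by (cases "f x0") auto
qed

lemma prox_char:
  fixes f :: "'a::{real_inner,complete_space} \<Rightarrow> ereal"
  assumes G: "f \<in> Gamma0"
  shows "\<exists>r. f (prox f x) = ereal r"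
    and "\<forall>z. f (prox f x) + ereal ((norm (x - prox f x))\<^sup>2 / 2) \<le> f z + ereal ((norm (x - z))\<^sup>2 / 2)"
proof -
  note gp = gamma_props[OF G]
  obtain x0 a where x0: "f x0 = ereal a" using gp(4) by blast
  obtain v where v: "f v < \<infinity>" "\<forall>z. f v + ereal ((norm (x - v))\<^sup>2 / (2*1)) \<le> f z + ereal ((norm (x - z))\<^sup>2 / (2*1))"
    using minimizer_ex[OF gp(1) gp(2) gp(3) x0, of 1 x] by auto
  have uq: "\<And>w. \<forall>z. f w + ereal ((norm (x - w))\<^sup>2 / (2*1)) \<le> f z + ereal ((norm (x - z))\<^sup>2 / (2*1)) \<Longrightarrow> w = v"
  proof -
    fix w assume "\<forall>z. f w + ereal ((norm (x - w))\<^sup>2 / (2*1)) \<le> f z + ereal ((norm (x - z))\<^sup>2 / (2*1))"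
    from minimizer_uniq[OF gp(1) gp(3) x0 _ this v(2)] show "w = v" by simp
  qed
  have "prox f x = v" unfolding prox_def
  proof (rule the_equality)
    show "\<forall>z. f v + ereal ((norm (x - v))\<^sup>2 / 2) \<le> f z + ereal ((norm (x - z))\<^sup>2 / 2)" using v(2) by simp
    fix w assume "\<forall>z. f w + ereal ((norm (x - w))\<^sup>2 / 2) \<le> f z + ereal ((norm (x - z))\<^sup>2 / 2)"
    then show "w = v" using uq by simp
  qed
  then show "\<forall>z. f (prox f x) + ereal ((norm (x - prox f x))\<^sup>2 / 2) \<le> f z + ereal ((norm (x - z))\<^sup>2 / 2)"
    using v(2) by simp
  show "\<exists>r. f (prox f x) = ereal r" using \<open>prox f x = v\<close> v(1) gp(3)[of v] by (cases "f v") auto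
qed

lemma prox_sub:
  fixes f :: "'a::{real_inner,complete_space} \<Rightarrow> ereal"
  assumes G: "f \<in> Gamma0"
  shows "f (prox f x) + ereal (inner (x - prox f x) (u - prox f x)) \<le> f u"
proof -
  note gp = gamma_props[OF G]
  obtain r where r: "f (prox f x) = ereal r" using prox_char(1)[OF G] by blast
  have "\<forall>z. f (prox f x) + ereal ((norm (x - prox f x))\<^sup>2 / (2*1)) \<le> f z + ereal ((norm (x - z))\<^sup>2 / (2*1))"
    using prox_char(2)[OF G, of x] by simp
  from subgrad[OF gp(1) gp(3) _ this r, of u] show ?thesis by simp
qed

lemma nsq: "(norm (a - b))\<^sup>2 = (norm a)\<^sup>2 - 2 * inner a b + (norm (b::'a::real_inner))\<^sup>2"
  using norm_expand[of a 1 b] by simp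

lemma test_alg:
  fixes x z p pz x0 :: "'a::real_inner"
  shows "inner z pz - inner (x - p) (pz - p) - (norm pz)\<^sup>2 / 2 \<le> inner p z - (norm p)\<^sup>2 / 2 + (norm (z - x))\<^sup>2 / 2"
proof -
  have "0 \<le> (norm ((z - x) - (pz - p)))\<^sup>2" by simp
  then show ?thesis
    unfolding power2_norm_eq_inner
    by (simp add: inner_diff_left inner_diff_right inner_add_left inner_add_right inner_commute field_simps)
qed

definition Phi :: "('a::real_inner \<Rightarrow> ereal) \<Rightarrow> 'a \<Rightarrow> 'a \<Rightarrow> real" where
  "Phi f x0 x = inner x (prox f x - x0) - real_of_ereal (f (prox f x)) - (norm (prox f x))\<^sup>2 / 2"

lemma prox_min_real:
  fixes f :: "'a::{real_inner,complete_space} \<Rightarrow> ereal"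
  assumes G: "f \<in> Gamma0" and fz: "f z = ereal c"
  shows "real_of_ereal (f (prox f x)) + (norm (x - prox f x))\<^sup>2 / 2 \<le> c + (norm (x - z))\<^sup>2 / 2"
proof -
  obtain r where r: "f (prox f x) = ereal r" using prox_char(1)[OF G] by blast
  show ?thesis using prox_char(2)[OF G, of x, rule_format, of z] r fz by simp
qed

lemma Phi_cvx:
  fixes f :: "'a::{real_inner,complete_space} \<Rightarrow> ereal"
  assumes G: "f \<in> Gamma0"
  shows "Phi f x0 x + inner (prox f x - x0) (z - x) \<le> Phi f x0 z"
proof -
  obtain r where r: "f (prox f x) = ereal r" using prox_char(1)[OF G] by blast
  have m: "real_of_ereal (f (prox f z)) + (norm (z - prox f z))\<^sup>2 / 2 \<le> r + (norm (z - prox f x))\<^sup>2 / 2"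
    by (rule prox_min_real[OF G r])
  then show ?thesis unfolding Phi_def r power2_norm_eq_inner
    by (simp add: inner_diff_left inner_diff_right inner_add_left inner_add_right inner_commute field_simps)
qed

lemma Phi_smooth:
  fixes f :: "'a::{real_inner,complete_space} \<Rightarrow> ereal"
  assumes G: "f \<in> Gamma0"
  shows "Phi f x0 z \<le> Phi f x0 x + inner (prox f x - x0) (z - x) + (norm (z - x))\<^sup>2 / 2"
proof -
  obtain r where r: "f (prox f x) = ereal r" using prox_char(1)[OF G] by blast
  obtain s where s: "f (prox f z) = ereal s" using prox_char(1)[OF G] by blast
  have "f (prox f x) + ereal (inner (x - prox f x) (prox f z - prox f x)) \<le> f (prox f z)"
    by (rule prox_sub[OF G])
  then have sub: "r + inner (x - prox f x) (prox f z - prox f x) \<le> s" using r s by simp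
  have sq: "0 \<le> (norm ((z - x) - (prox f z - prox f x)))\<^sup>2" by simp
  show ?thesis using sub sq unfolding Phi_def r s power2_norm_eq_inner
    by (simp add: inner_diff_left inner_diff_right inner_add_left inner_add_right inner_commute field_simps)
qed

lemma Phi_fy:
  fixes f :: "'a::{real_inner,complete_space} \<Rightarrow> ereal"
  assumes G: "f \<in> Gamma0" and fy: "f y = ereal c"
  shows "inner x (y - x0) - c - (norm y)\<^sup>2 / 2 \<le> Phi f x0 x"
proof -
  have m: "real_of_ereal (f (prox f x)) + (norm (x - prox f x))\<^sup>2 / 2 \<le> c + (norm (x - y))\<^sup>2 / 2"
    by (rule prox_min_real[OF G fy])
  then show ?thesis unfolding Phi_def power2_norm_eq_inner
    by (simp add: inner_diff_left inner_diff_right inner_add_left inner_add_right inner_commute field_simps)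
qed

lemma prox_coco:
  fixes f :: "'a::{real_inner,complete_space} \<Rightarrow> ereal"
  assumes G: "f \<in> Gamma0"
  shows "(norm ((prox f a - x0) - (prox f b - x0)))\<^sup>2 \<le> inner ((prox f a - x0) - (prox f b - x0)) (a - b)"
proof -
  obtain r where r: "f (prox f a) = ereal r" using prox_char(1)[OF G] by blast
  obtain s where s: "f (prox f b) = ereal s" using prox_char(1)[OF G] by blast
  have "f (prox f a) + ereal (inner (a - prox f a) (prox f b - prox f a)) \<le> f (prox f b)"
    by (rule prox_sub[OF G])
  then have s1: "r + inner (a - prox f a) (prox f b - prox f a) \<le> s" using r s by simp
  have "f (prox f b) + ereal (inner (b - prox f b) (prox f a - prox f b)) \<le> f (prox f a)"
    by (rule prox_sub[OF G])
  then have s2: "s + inner (b - prox f b) (prox f a - prox f b) \<le> r" using r s by simp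
  show ?thesis using s1 s2 unfolding power2_norm_eq_inner
    by (simp add: inner_diff_left inner_diff_right inner_add_left inner_add_right inner_commute field_simps)
qed

lemma hard_arith:
  assumes "(d::real) \<ge> \<rho>" "\<rho> > 0" "l > 0" "l \<le> \<rho>\<^sup>2 / (2 * K)" "K = \<rho> * B + c + 1" "B \<ge> 0" "c \<ge> 0"
  shows "d\<^sup>2 / (2*l) \<ge> d * B + c + 1"
proof -
  have K: "K > 0" using assms by (smt (verit) mult_nonneg_nonneg)
  have "2 * K * l \<le> \<rho>\<^sup>2" using assms(4) K by (simp add: field_simps)
  then have i1: "K / \<rho>\<^sup>2 \<le> 1 / (2*l)" using assms(2,3) K by (simp add: field_simps)
  have "d\<^sup>2 * (K / \<rho>\<^sup>2) \<le> d\<^sup>2 * (1 / (2*l))" by (rule mult_left_mono[OF i1]) simp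
  then have i2: "(d / \<rho>)\<^sup>2 * K \<le> d\<^sup>2 / (2*l)" by (simp add: power_divide)
  have r1: "d / \<rho> \<ge> 1" using assms(1,2) by simp
  then have "(d / \<rho>) * 1 \<le> (d / \<rho>) * (d / \<rho>)" by (intro mult_left_mono) auto
  then have "(d / \<rho>) * 1 * K \<le> (d / \<rho>) * (d / \<rho>) * K" using K by (intro mult_right_mono) auto
  then have "(d / \<rho>) * K \<le> (d / \<rho>)\<^sup>2 * K" by (simp only: power2_eq_square mult_1_right)
  moreover have "(d / \<rho>) * K = d * B + (d / \<rho>) * (c + 1)" using assms(2,5) by (simp add: field_simps)
  moreover have "(d / \<rho>) * (c + 1) \<ge> c + 1" using r1 assms(7) by (metis mult_right_mono mult_1 add_nonneg_pos zero_less_one less_imp_le)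
  ultimately show ?thesis using i2 by argo
qed

lemma Phi_hard:
  fixes h :: "'a::{real_inner,complete_space} \<Rightarrow> ereal"
  assumes G: "h \<in> Gamma0" and M: "ereal M < h y + ereal ((norm y)\<^sup>2 / 2)"
  shows "\<exists>w. M < inner w (y - x0) - Phi h x0 w"
proof -
  note gp = gamma_props[OF G]
  obtain x1 a1 where x1: "h x1 = ereal a1" using gp(4) by blast
  obtain A B where AB: "B \<ge> 0" "\<And>u. ereal (A - B * norm (u - x1)) \<le> h u"
    using lin_lb[OF gp(1) gp(2) gp(3) x1] by auto
  define A' where "A' = A - B * norm (y - x1)"
  have lb: "ereal (A' - B * norm (u - y)) \<le> h u" for u
  proof -
    have "norm (u - x1) \<le> norm (u - y) + norm (y - x1)" by (metis dist_norm dist_triangle)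
    then have "B * norm (u - x1) \<le> B * norm (u - y) + B * norm (y - x1)"
      using AB(1) by (metis distrib_left mult_left_mono)
    then have "A' - B * norm (u - y) \<le> A - B * norm (u - x1)" unfolding A'_def by argo
    then show ?thesis using AB(2)[of u] by (meson ereal_less_eq(3) order_trans)
  qed
  define M' where "M' = M - (norm y)\<^sup>2 / 2"
  have M': "ereal M' < h y" using M gp(3)[of y] by (cases "h y") (auto simp: M'_def)
  obtain \<rho> where \<rho>: "\<rho> > 0" "\<And>u. dist u y < \<rho> \<Longrightarrow> ereal M' < h u"
    using lsc_nbhd[OF gp(2) M'] by auto
  define K where "K = \<rho> * B + \<bar>M' - A'\<bar> + 1"
  have K: "K > 0" using \<rho>(1) AB(1) by (simp add: K_def add_nonneg_pos)
  define l where "l = min 1 (\<rho>\<^sup>2 / (2 * K))"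
  have l0: "l > 0" using K \<rho>(1) by (simp add: l_def)
  have l1: "l \<le> 1" and l2: "l \<le> \<rho>\<^sup>2 / (2 * K)" by (simp_all add: l_def)
  obtain v where v: "h v < \<infinity>" "\<forall>z. h v + ereal ((norm (y - v))\<^sup>2 / (2*l)) \<le> h z + ereal ((norm (y - z))\<^sup>2 / (2*l))"
    using minimizer_ex[OF gp(1) gp(2) gp(3) x1 l0, of y] by auto
  obtain \<alpha> where \<alpha>: "h v = ereal \<alpha>" using v(1) gp(3)[of v] by (cases "h v") auto
  define D where "D = (norm (y - v))\<^sup>2"
  have D0: "D \<ge> 0" by (simp add: D_def)
  have val: "M' < \<alpha> + D / (2*l)"
  proof (cases "norm (y - v) < \<rho>")
    case True
    then have "ereal M' < h v" using \<rho>(2)[of v] by (simp add: dist_norm norm_minus_commute)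
    then have "M' < \<alpha>" using \<alpha> by simp
    moreover have "D / (2*l) \<ge> 0" using D0 l0 by simp
    ultimately show ?thesis by argo
  next
    case False
    then have "norm (y - v) \<ge> \<rho>" by simp
    from hard_arith[OF this \<rho>(1) l0 l2 K_def AB(1)] have
      "D / (2*l) \<ge> norm (y - v) * B + \<bar>M' - A'\<bar> + 1" by (simp add: D_def)
    moreover have "A' - B * norm (y - v) \<le> \<alpha>" using lb[of v] \<alpha> by (simp add: norm_minus_commute)
    ultimately show ?thesis by argo
  qed
  have sg: "\<And>u. h v + ereal (inner (y - v) (u - v) / l) \<le> h u"
    by (rule subgrad[OF gp(1) gp(3) l0 v(2) \<alpha>])
  define s where "s = (1/l) *\<^sub>R (y - v)"
  define w where "w = v + s"
  define pw where "pw = prox h w"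
  obtain \<beta> where \<beta>: "h pw = ereal \<beta>" using prox_char(1)[OF G] pw_def by blast
  have "inner (y - v) (pw - v) / l = inner s (pw - v)" by (simp add: s_def)
  then have f1: "\<alpha> + inner s (pw - v) \<le> \<beta>" using sg[of pw] \<alpha> \<beta> by simp
  have f2: "0 \<le> (norm (pw - v))\<^sup>2" by simp
  define X where "X = D / l"
  define Y where "Y = D / (2*l)"
  have f3: "inner s (y - v) = X" by (simp add: s_def X_def D_def power2_norm_eq_inner)
  have f5: "Y \<le> X - D / 2"
  proof -
    have "D / (2*l) + D / 2 \<le> D / l"
    proof -
      have "D * (1/(2*l) + 1/2) \<le> D * (1 / l)"
        using D0 l0 l1 by (intro mult_left_mono) (auto simp: field_simps)
      then show ?thesis by (simp add: algebra_simps)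
    qed
    then show ?thesis unfolding X_def Y_def by argo
  qed
  have f6: "M' < \<alpha> + Y" using val by (simp add: Y_def)
  have f4: "D = inner y y - 2 * inner y v + inner v v" unfolding D_def power2_norm_eq_inner
    by (simp add: inner_diff_left inner_diff_right inner_commute)
  have "M < inner w (y - x0) - Phi h x0 w"
    using f1 f2 f3 f4 f5 f6 \<beta> unfolding Phi_def pw_def[symmetric] unfolding w_def M'_def power2_norm_eq_inner
    by (simp add: inner_diff_left inner_diff_right inner_add_left inner_add_right inner_commute) argo
  then show ?thesis by blast
qed

lemma descent:
  fixes \<Phi> \<Psi> :: "'a::real_inner \<Rightarrow> real" and G H :: "'a \<Rightarrow> 'a"
  assumes cvxP: "\<And>x z. \<Phi> x + inner (G x) (z - x) \<le> \<Phi> z"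
    and cvxQ: "\<And>x z. \<Psi> x + inner (H x) (z - x) \<le> \<Psi> z"
    and smQ: "\<And>x z. \<Psi> z \<le> \<Psi> x + inner (H x) (z - x) + (norm (z - x))\<^sup>2 / 2"
    and coco: "\<And>a b. (norm (H a - H b))\<^sup>2 \<le> inner (H a - H b) (a - b)"
    and cmp: "\<And>x. norm (G x) \<le> norm (H x)"
    and lbQ: "\<And>x. LQ \<le> \<Psi> x"
    and infP: "\<And>e. e > 0 \<Longrightarrow> \<exists>w. \<Phi> w \<le> LP + e"
  shows "\<Phi> x - LP \<le> \<Psi> x - LQ"
proof (rule ccontr)
  assume neg: "\<not> ?thesis"
  define D where "D = \<Psi> x - LQ"
  define \<gamma> where "\<gamma> = \<Phi> x - LP - D"
  have \<gamma>: "\<gamma> > 0" using neg by (simp add: \<gamma>_def D_def)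
  have D0: "D \<ge> 0" using lbQ[of x] by (simp add: D_def)
  define t where "t = min 1 (\<gamma> / (4 * (D + 1)))"
  have t0: "t > 0" using \<gamma> D0 by (simp add: t_def)
  have t1: "t \<le> 1" by (simp add: t_def)
  have tD: "t * D \<le> \<gamma> / 4"
  proof -
    have "t * D \<le> (\<gamma> / (4 * (D + 1))) * D" using D0 by (intro mult_right_mono) (auto simp: t_def)
    also have "\<dots> = (\<gamma> / 4) * (D / (D + 1))" using D0 by simp
    also have "\<dots> \<le> (\<gamma> / 4) * 1" using D0 \<gamma> by (intro mult_left_mono) auto
    finally show ?thesis by simp
  qed
  define T where "T y = y - t *\<^sub>R H y" for y
  define z where "z n = (T ^^ n) x" for n
  have zS: "z (Suc n) = z n - t *\<^sub>R H (z n)" for n by (simp add: z_def T_def)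
  have z0: "z 0 = x" by (simp add: z_def)
  define c where "c = t - t\<^sup>2 / 2"
  have tt: "t\<^sup>2 \<le> t" using t0 t1 by (simp add: power2_eq_square mult_le_cancel_left1)
  have c: "c \<ge> t / 2" using tt by (simp add: c_def)
  have cpos: "c > 0" using c t0 by simp
  have a: "\<Psi> (z (Suc k)) \<le> \<Psi> (z k) - c * (norm (H (z k)))\<^sup>2" for k
  proof -
    have "\<Psi> (z (Suc k)) \<le> \<Psi> (z k) + inner (H (z k)) (z (Suc k) - z k) + (norm (z (Suc k) - z k))\<^sup>2 / 2"
      by (rule smQ)
    also have "z (Suc k) - z k = - (t *\<^sub>R H (z k))" by (simp add: zS)
    finally have f: "\<Psi> (z (Suc k)) \<le> \<Psi> (z k) + inner (H (z k)) (- (t *\<^sub>R H (z k))) + (norm (- (t *\<^sub>R H (z k))))\<^sup>2 / 2" .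
    have i1: "inner (H (z k)) (- (t *\<^sub>R H (z k))) = - t * (norm (H (z k)))\<^sup>2" by (simp add: power2_norm_eq_inner)
    have i2: "(norm (- (t *\<^sub>R H (z k))))\<^sup>2 = t\<^sup>2 * (norm (H (z k)))\<^sup>2" by (simp add: power_mult_distrib)
    show ?thesis using f unfolding i1 i2 c_def by (simp add: algebra_simps)
  qed
  have b: "\<Phi> (z k) - \<Phi> (z (Suc k)) \<le> t * (norm (H (z k)))\<^sup>2" for k
  proof -
    have "\<Phi> (z k) + inner (G (z k)) (z (Suc k) - z k) \<le> \<Phi> (z (Suc k))" by (rule cvxP)
    moreover have "inner (G (z k)) (z (Suc k) - z k) = - t * inner (G (z k)) (H (z k))" by (simp add: zS)
    moreover have "inner (G (z k)) (H (z k)) \<le> norm (G (z k)) * norm (H (z k))" by (rule norm_cauchy_schwarz)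
    moreover have "norm (G (z k)) * norm (H (z k)) \<le> norm (H (z k)) * norm (H (z k))"
      using cmp by (intro mult_right_mono) auto
    ultimately have "\<Phi> (z k) + - t * inner (G (z k)) (H (z k)) \<le> \<Phi> (z (Suc k))"
      "inner (G (z k)) (H (z k)) \<le> norm (H (z k)) * norm (H (z k))" by auto
    moreover have "t * inner (G (z k)) (H (z k)) \<le> t * (norm (H (z k)) * norm (H (z k)))"
      using t0 calculation(2) by (intro mult_left_mono) auto
    ultimately have "\<Phi> (z k) - \<Phi> (z (Suc k)) \<le> t * (norm (H (z k)) * norm (H (z k)))"
      by argo
    then show ?thesis by (simp add: power2_eq_square)
  qed
  have ab: "\<Phi> x - \<Phi> (z n) \<le> (t / c) * (\<Psi> x - \<Psi> (z n))" for n
  proof (induction n)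
    case 0 then show ?case by (simp add: z0)
  next
    case (Suc n)
    have "t * (norm (H (z n)))\<^sup>2 = (t / c) * (c * (norm (H (z n)))\<^sup>2)" using cpos by simp
    also have "\<dots> \<le> (t / c) * (\<Psi> (z n) - \<Psi> (z (Suc n)))"
      using a[of n] t0 cpos by (intro mult_left_mono) auto
    finally have "\<Phi> (z n) - \<Phi> (z (Suc n)) \<le> (t / c) * (\<Psi> (z n) - \<Psi> (z (Suc n)))"
      using b[of n] by argo
    then show ?case using Suc by (simp add: algebra_simps)
  qed
  have tc: "t / c \<le> 1 + t"
  proof -
    have "t \<le> (1 + t) * c" using tt t0 t1 by (simp add: c_def algebra_simps power2_eq_square)
    then show ?thesis using cpos by (simp add: divide_le_eq mult.commute)
  qed
  have lowP: "\<Phi> (z n) \<ge> LP + 3 * \<gamma> / 4" for n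
  proof -
    have "(t / c) * (\<Psi> x - \<Psi> (z n)) \<le> (t / c) * D"
      using lbQ[of "z n"] t0 cpos by (intro mult_left_mono) (auto simp: D_def)
    also have "\<dots> \<le> (1 + t) * D" using tc D0 by (intro mult_right_mono) auto
    finally have "\<Phi> x - \<Phi> (z n) \<le> D + t * D" using ab[of n] by (simp add: algebra_simps)
    then show ?thesis using tD \<gamma>_def by argo
  qed
  have "\<gamma> / 4 > 0" using \<gamma> by simp
  then obtain w where w: "\<Phi> w \<le> LP + \<gamma> / 4" using infP by blast
  define K where "K = \<Psi> w - LQ"
  have K0: "K \<ge> 0" using lbQ[of w] by (simp add: K_def)
  have Hmono: "norm (H (z (Suc k))) \<le> norm (H (z k))" for k
  proof -
    define p where "p = H (z (Suc k))"
    define q where "q = H (z k)"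
    have "(norm (p - q))\<^sup>2 \<le> inner (p - q) (- (t *\<^sub>R q))"
      using coco[of "z (Suc k)" "z k"] by (simp add: p_def q_def zS)
    then have ineq: "inner p p + (1 - t) * inner q q \<le> (2 - t) * inner p q"
      unfolding power2_norm_eq_inner
      by (simp add: inner_diff_left inner_diff_right inner_commute algebra_simps)
    have "inner p q \<le> norm p * norm q" by (rule norm_cauchy_schwarz)
    then have "(2 - t) * inner p q \<le> (2 - t) * (norm p * norm q)" using t1 by (intro mult_left_mono) auto
    with ineq have ineq2: "(norm p)\<^sup>2 + (1 - t) * (norm q)\<^sup>2 \<le> (2 - t) * (norm p * norm q)"
      by (simp add: power2_norm_eq_inner)
    show ?thesis
    proof (rule ccontr)
      assume "\<not> ?thesis"
      then have pq: "norm p > norm q" by (simp add: p_def q_def)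
      have "norm p - (1 - t) * norm q > 0"
      proof -
        have "t * norm q \<ge> 0" using t0 by simp
        then have "(1 - t) * norm q \<le> norm q" by (simp add: algebra_simps)
        then show ?thesis using pq by argo
      qed
      then have "(norm p - norm q) * (norm p - (1 - t) * norm q) > 0" using pq by simp
      then have "(norm p)\<^sup>2 + (1 - t) * (norm q)\<^sup>2 > (2 - t) * (norm p * norm q)"
        by (simp add: power2_eq_square algebra_simps)
      with ineq2 show False by argo
    qed
  qed
  have Hmono2: "norm (H (z (n + j))) \<le> norm (H (z n))" for n j
  proof (induction j)
    case (Suc j) then show ?case using Hmono[of "n + j"] by simp
  qed simp
  have dist: "(norm (z n - w))\<^sup>2 \<le> (norm (x - w))\<^sup>2 + 2 * t * n * K" for n
  proof (induction n)
    case 0 then show ?case by (simp add: z0)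
  next
    case (Suc n)
    define hn where "hn = H (z n)"
    have e: "z (Suc n) - w = (z n - w) - t *\<^sub>R hn" by (simp add: zS hn_def)
    have ex: "(norm (z (Suc n) - w))\<^sup>2 = (norm (z n - w))\<^sup>2 - 2 * t * inner (z n - w) hn + t\<^sup>2 * (norm hn)\<^sup>2"
      unfolding e by (rule norm_expand)
    have i1: "inner (z n - w) hn \<ge> \<Psi> (z n) - \<Psi> w"
    proof -
      have "\<Psi> (z n) + inner hn (w - z n) \<le> \<Psi> w" unfolding hn_def by (rule cvxQ)
      moreover have "inner hn (w - z n) = - inner (z n - w) hn"
        by (simp add: inner_commute inner_diff_left inner_diff_right)
      ultimately show ?thesis by argo
    qed
    have i2: "t\<^sup>2 * (norm hn)\<^sup>2 \<le> 2 * t * (\<Psi> (z n) - \<Psi> (z (Suc n)))"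
    proof -
      have "t * t\<^sup>2 \<le> t * t" using tt t0 by (intro mult_left_mono) auto
      then have "t\<^sup>2 \<le> 2 * t * c" by (simp add: c_def power2_eq_square algebra_simps)
      then have "t\<^sup>2 * (norm hn)\<^sup>2 \<le> 2 * t * c * (norm hn)\<^sup>2" by (intro mult_right_mono) auto
      also have "\<dots> = 2 * t * (c * (norm hn)\<^sup>2)" by simp
      also have "\<dots> \<le> 2 * t * (\<Psi> (z n) - \<Psi> (z (Suc n)))"
        using a[of n] t0 by (intro mult_left_mono) (auto simp: hn_def)
      finally show ?thesis .
    qed
    have i3: "2 * t * inner (z n - w) hn \<ge> 2 * t * (\<Psi> (z n) - \<Psi> w)"
      using i1 t0 by (intro mult_left_mono) auto
    have i4: "2 * t * (\<Psi> w - \<Psi> (z (Suc n))) \<le> 2 * t * K"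
      using lbQ[of "z (Suc n)"] t0 by (intro mult_left_mono) (auto simp: K_def)
    have "(norm (z (Suc n) - w))\<^sup>2 \<le> (norm (z n - w))\<^sup>2 + 2 * t * (\<Psi> w - \<Psi> (z (Suc n)))"
      using ex i2 i3 by (simp add: algebra_simps)
    then show ?case using Suc i4 by (simp add: algebra_simps)
  qed
  have tail: "(t / 2) * j * (norm (H (z (n + j))))\<^sup>2 \<le> \<Psi> (z n) - \<Psi> (z (n + j))" for n j
  proof (induction j)
    case 0 then show ?case by simp
  next
    case (Suc j)
    have h1: "(norm (H (z (n + Suc j))))\<^sup>2 \<le> (norm (H (z (n + j))))\<^sup>2"
      using Hmono[of "n + j"] by (simp add: power_mono)
    have "(t / 2) * real (Suc j) * (norm (H (z (n + Suc j))))\<^sup>2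
        = (t / 2) * j * (norm (H (z (n + Suc j))))\<^sup>2 + (t / 2) * (norm (H (z (n + Suc j))))\<^sup>2"
      by (simp add: algebra_simps)
    also have "\<dots> \<le> (t / 2) * j * (norm (H (z (n + j))))\<^sup>2 + (t / 2) * (norm (H (z (n + j))))\<^sup>2"
      using h1 t0 by (intro add_mono mult_left_mono) auto
    also have "(t / 2) * (norm (H (z (n + j))))\<^sup>2 \<le> c * (norm (H (z (n + j))))\<^sup>2"
      using c by (intro mult_right_mono) auto
    also have "c * (norm (H (z (n + j))))\<^sup>2 \<le> \<Psi> (z (n + j)) - \<Psi> (z (n + Suc j))"
      using a[of "n + j"] by simp
    finally show ?case using Suc by simp
  qed
  have dec: "decseq (\<lambda>n. \<Psi> (z n))"
  proof (rule decseq_SucI)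
    fix n show "\<Psi> (z (Suc n)) \<le> \<Psi> (z n)" using a[of n] cpos by (smt (verit) mult_nonneg_nonneg zero_le_power2)
  qed
  obtain L where "(\<lambda>n. \<Psi> (z n)) \<longlonglongrightarrow> L" using decseq_convergent[OF dec, of LQ] lbQ by blast
  then have cau: "Cauchy (\<lambda>n. \<Psi> (z n))" by (rule LIMSEQ_imp_Cauchy)
  define E0 where "E0 = (norm (x - w))\<^sup>2 + 4 * t * K + 1"
  have E0: "E0 \<ge> 1" using t0 K0 by (simp add: E0_def)
  define e where "e = (\<gamma> / 4)\<^sup>2 * t / (2 * E0)"
  have e: "e > 0" using \<gamma> t0 E0 by (simp add: e_def)
  obtain N where N: "\<And>m n. m \<ge> N \<Longrightarrow> n \<ge> N \<Longrightarrow> norm (\<Psi> (z m) - \<Psi> (z n)) < e"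
    using CauchyD[OF cau e] by blast
  define n where "n = Suc N"
  have "\<Psi> (z n) - \<Psi> (z (n + n)) < e" using N[of n "n + n"] by (simp add: n_def)
  moreover have "(t / 2) * n * (norm (H (z (n + n))))\<^sup>2 \<le> \<Psi> (z n) - \<Psi> (z (n + n))" by (rule tail)
  ultimately have "(t / 2) * (n * (norm (H (z (n + n))))\<^sup>2) < e" by simp
  then have nhh: "n * (norm (H (z (n + n))))\<^sup>2 < (\<gamma> / 4)\<^sup>2 / E0"
    using t0 E0 by (simp add: e_def field_simps)
  define hh where "hh = (norm (H (z (n + n))))\<^sup>2"
  define dd where "dd = (norm (z (n + n) - w))\<^sup>2"
  have n1: "real n \<ge> 1" by (simp add: n_def)
  have hh0: "hh \<ge> 0" by (simp add: hh_def)
  have "dd \<le> (norm (x - w))\<^sup>2 + 2 * t * real (n + n) * K" unfolding dd_def by (rule dist)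
  then have dd: "dd \<le> (norm (x - w))\<^sup>2 + 4 * t * K * n" by (simp add: algebra_simps)
  have "hh * dd \<le> hh * ((norm (x - w))\<^sup>2 + 4 * t * K * n)" using dd hh0 by (intro mult_left_mono) auto
  also have "\<dots> = hh * (norm (x - w))\<^sup>2 + 4 * t * K * (n * hh)" by (simp add: algebra_simps)
  also have "\<dots> \<le> (n * hh) * (norm (x - w))\<^sup>2 + 4 * t * K * (n * hh)"
  proof -
    have "hh \<le> n * hh" using n1 hh0 by (simp add: mult_le_cancel_right1)
    then have "hh * (norm (x - w))\<^sup>2 \<le> (n * hh) * (norm (x - w))\<^sup>2" by (rule mult_right_mono) simp
    then show ?thesis by (rule add_right_mono)
  qed
  also have "\<dots> = (n * hh) * (E0 - 1)" by (simp add: E0_def algebra_simps)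
  also have "\<dots> \<le> (n * hh) * E0" using hh0 by (intro mult_left_mono) auto
  also have "\<dots> < ((\<gamma> / 4)\<^sup>2 / E0) * E0" using nhh E0 by (intro mult_strict_right_mono) (auto simp: hh_def)
  also have "\<dots> = (\<gamma> / 4)\<^sup>2" using E0 by simp
  finally have "(norm (H (z (n + n))) * norm (z (n + n) - w))\<^sup>2 < (\<gamma> / 4)\<^sup>2"
    by (simp add: hh_def dd_def power_mult_distrib)
  then have prod: "norm (H (z (n + n))) * norm (z (n + n) - w) < \<gamma> / 4"
    by (rule power_less_imp_less_base[OF _ ]) (use \<gamma> in auto)
  have "\<Phi> (z (n + n)) + inner (G (z (n + n))) (w - z (n + n)) \<le> \<Phi> w" by (rule cvxP)
  moreover have "- inner (G (z (n + n))) (w - z (n + n)) \<le> norm (G (z (n + n))) * norm (z (n + n) - w)"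
  proof -
    have "- inner (G (z (n + n))) (w - z (n + n)) = inner (G (z (n + n))) (z (n + n) - w)"
      by (simp add: inner_diff_right)
    also have "\<dots> \<le> norm (G (z (n + n))) * norm (z (n + n) - w)" by (rule norm_cauchy_schwarz)
    finally show ?thesis .
  qed
  moreover have "norm (G (z (n + n))) * norm (z (n + n) - w) \<le> norm (H (z (n + n))) * norm (z (n + n) - w)"
    using cmp by (intro mult_right_mono) auto
  ultimately have "\<Phi> (z (n + n)) < LP + \<gamma> / 2" using prod w by argo
  with lowP[of "n + n"] \<gamma> show False by argo
qed

theorem theorem2:
  fixes f g :: "'a::{real_inner, complete_space} \<Rightarrow> ereal" and x0 :: 'a
  assumes "f \<in> Gamma0" and "g \<in> Gamma0"
    and "x0 \<in> edom f \<inter> edom g"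
    and "\<And>x. norm (prox f x - x0) \<le> norm (prox g x - x0)"
  shows "\<forall>x. g x - g x0 \<le> f x - f x0"
proof
  fix y
  note gf = gamma_props[OF assms(1)] and gg = gamma_props[OF assms(2)]
  obtain a0 where a0: "f x0 = ereal a0"
    using assms(3) gf(3)[of x0] by (cases "f x0") (auto simp: edom_def)
  obtain b0 where b0: "g x0 = ereal b0"
    using assms(3) gg(3)[of x0] by (cases "g x0") (auto simp: edom_def)
  define LP where "LP = - a0 - (norm x0)\<^sup>2 / 2"
  define LQ where "LQ = - b0 - (norm x0)\<^sup>2 / 2"
  have key: "Phi f x0 x - LP \<le> Phi g x0 x - LQ" for x
  proof (rule descent[where G = "\<lambda>x. prox f x - x0" and H = "\<lambda>x. prox g x - x0"])
    show "\<And>x z. Phi f x0 x + inner (prox f x - x0) (z - x) \<le> Phi f x0 z" by (rule Phi_cvx[OF assms(1)])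
    show "\<And>x z. Phi g x0 x + inner (prox g x - x0) (z - x) \<le> Phi g x0 z" by (rule Phi_cvx[OF assms(2)])
    show "\<And>x z. Phi g x0 z \<le> Phi g x0 x + inner (prox g x - x0) (z - x) + (norm (z - x))\<^sup>2 / 2"
      by (rule Phi_smooth[OF assms(2)])
    show "\<And>a b. (norm ((prox g a - x0) - (prox g b - x0)))\<^sup>2 \<le> inner ((prox g a - x0) - (prox g b - x0)) (a - b)"
      by (rule prox_coco[OF assms(2)])
    show "\<And>x. norm (prox f x - x0) \<le> norm (prox g x - x0)" by (rule assms(4))
    show "LQ \<le> Phi g x0 x" for x using Phi_fy[OF assms(2) b0, of x x0] by (simp add: LQ_def)
    show "\<exists>w. Phi f x0 w \<le> LP + e" if e: "e > 0" for e
    proof -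
      have "ereal (a0 + (norm x0)\<^sup>2 / 2 - e) < f x0 + ereal ((norm x0)\<^sup>2 / 2)" using a0 e by simp
      from Phi_hard[OF assms(1) this, of x0] obtain w where
        "a0 + (norm x0)\<^sup>2 / 2 - e < inner w (x0 - x0) - Phi f x0 w" by blast
      then have "Phi f x0 w \<le> LP + e" by (simp add: LP_def)
      then show ?thesis by blast
    qed
  qed
  show "g y - g x0 \<le> f y - f x0"
  proof (cases "f y")
    case PInf then show ?thesis using a0 by simp
  next
    case MInf then show ?thesis using gf(3) by simp
  next
    case (real c)
    show ?thesis
    proof (rule ccontr)
      assume "\<not> ?thesis"
      then have "ereal (c - a0 + b0) < g y" using real a0 b0 gg(3)[of y] by (cases "g y") auto
      then have "ereal (c - a0 + b0 + (norm y)\<^sup>2 / 2) < g y + ereal ((norm y)\<^sup>2 / 2)"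
        using gg(3)[of y] by (cases "g y") auto
      from Phi_hard[OF assms(2) this, of x0] obtain x where
        x: "c - a0 + b0 + (norm y)\<^sup>2 / 2 < inner x (y - x0) - Phi g x0 x" by blast
      have "inner x (y - x0) - c - (norm y)\<^sup>2 / 2 \<le> Phi f x0 x" by (rule Phi_fy[OF assms(1) real])
      with key[of x] x show False unfolding LP_def LQ_def by argo
    qed
  qed
qed

end
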